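(* Let $(\gamma_n)$ be a sequence of positive reals satisfying conditions (C1)–(C7) below, with associated orthonormal polynomials $p_n$ and operators $K^n$. For $\omega\in\mathbb{R}$ let $e_\omega(t)=e^{i\omega t}$. Then for every $\omega\in\mathbb{R}$, $e_\omega\in\mathcal{L}$ and $\lim_{n\to\infty}\gamma_n\bigl(|K^n[e_\omega(t)]|^2+|K^{n+1}[e_\omega(t)]|^2\bigr)$ is a positive finite number (so $e_\omega$ represents a nonzero element of $\mathcal{L}_2$). Moreover, for all real $\omega\neq\sigma$ and all $t\in\mathbb{R}$, \[ \lim_{n\to\infty}\frac{\sum_{k=0}^n K^k_t[e^{i\omega t}]\,K^k_t\bigl[\overline{e^{i\sigma t}}\bigr]}{\sum_{j=0}^n \frac{1}{\gamma_j}}=0. \]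
   Context: Given positive reals $\gamma_n$, set $\gamma_{-1}=1$, $p_{-1}=0$, $p_0=1$ and $\gamma_n p_{n+1}(\omega)=\omega p_n(\omega)-\gamma_{n-1}p_{n-1}(\omega)$ ($n\ge0$). Let $\Delta_n=\gamma_{n+1}-\gamma_n$, $\Delta^2_n=\Delta_{n+1}-\Delta_n$. Conditions: (C1) $\gamma_n\to\infty$; (C2) $\Delta_n\to0$; (C3) there exist $n_0,m_0$ with $\gamma_{n+m}>\gamma_n$ for all $n\ge n_0$, $m\ge m_0$; (C4) $\sum 1/\gamma_j=\infty$; (C5) some $\kappa>1$ has $\sum\gamma_j^{-\kappa}<\infty$; (C6) $\sum|\Delta_n|/\gamma_n^2<\infty$; (C7) $\sum|\Delta^2_n|/\gamma_n<\infty$. Let $C^\infty_{\mathbb{R}\to\mathbb{C}}$ be the set of functions $f:\mathbb{R}\to\mathbb{C}$ whose real and imaginary parts are infinitely differentiable. Define the differential operators $K^n_t=(-i)^n p_n\!\left(i\frac{d}{dt}\right)$ (so $K^n_t[e^{i\omega t}]=i^n p_n(\omega)e^{i\omega t}$). $\mathcal{L}$ is the set of $f\in C^\infty_{\mathbb{R}\to\mathbb{C}}$ such that $\beta_n^f(t)=\gamma_n(|K^n[f(t)]|^2+|K^{n+1}[f(t)]|^2)$ converges uniformly on every compact interval; $\mathcal{L}_0$ is the subset of those $f$ for which this limit is $0$, and $\mathcal{L}_2=\mathcal{L}/\mathcal{L}_0$. *)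

theory Defs
  imports "HOL-Analysis.Analysis" "HOL-Computational_Algebra.Polynomial"
begin

text \<open>Orthonormal polynomials p_n as real polynomials, from the three-term recurrence
  with gamma_{-1} = 1, p_{-1} = 0, p_0 = 1.\<close>
fun opoly :: "(nat \<Rightarrow> real) \<Rightarrow> nat \<Rightarrow> real poly" where
  "opoly g 0 = 1"
| "opoly g (Suc 0) = smult (1 / g 0) [:0, 1:]"
| "opoly g (Suc (Suc n)) =
     smult (1 / g (Suc n)) ([:0, 1:] * opoly g (Suc n) - smult (g n) (opoly g n))"

fun vdiff :: "nat \<Rightarrow> (real \<Rightarrow> complex) \<Rightarrow> real \<Rightarrow> complex" where
  "vdiff 0 f = f"
| "vdiff (Suc k) f = (\<lambda>t. vector_derivative (vdiff k f) (at t))"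

definition smoothRC :: "(real \<Rightarrow> complex) \<Rightarrow> bool" where
  "smoothRC f \<longleftrightarrow> (\<forall>k t. (vdiff k f has_vector_derivative vdiff (Suc k) f t) (at t))"

text \<open>K^n_t = (-i)^n p_n(i d/dt).\<close>
definition Kop :: "(nat \<Rightarrow> real) \<Rightarrow> nat \<Rightarrow> (real \<Rightarrow> complex) \<Rightarrow> real \<Rightarrow> complex" where
  "Kop g n f t = (- \<i>) ^ n *
     (\<Sum>k\<le>degree (opoly g n). complex_of_real (coeff (opoly g n) k) * \<i> ^ k * vdiff k f t)"

definition beta :: "(nat \<Rightarrow> real) \<Rightarrow> (real \<Rightarrow> complex) \<Rightarrow> nat \<Rightarrow> real \<Rightarrow> real" where
  "beta g f n t = g n * ((cmod (Kop g n f t))\<^sup>2 + (cmod (Kop g (Suc n) f t))\<^sup>2)"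

definition classL :: "(nat \<Rightarrow> real) \<Rightarrow> (real \<Rightarrow> complex) set" where
  "classL g = {f. smoothRC f \<and>
     (\<exists>h. \<forall>a b. uniform_limit {a..b} (beta g f) h sequentially)}"

end

theory Submission
  imports Defs
begin



lemma opoly_par: "poly (opoly g n) (-x) = (-1)^n * poly (opoly g n) x"
  by (induction g n rule: opoly.induct) (auto simp: algebra_simps)

lemma exp_hvd: "((\<lambda>s. (\<i> * complex_of_real w)^k * exp (\<i> * complex_of_real (w * s))) has_vector_derivative
     (\<i> * complex_of_real w)^Suc k * exp (\<i> * complex_of_real (w * t))) (at t)"
proof -
  have "((\<lambda>z. (\<i> * complex_of_real w)^k * exp (\<i> * complex_of_real w * z)) has_field_derivative
     (\<i> * complex_of_real w)^Suc k * exp (\<i> * complex_of_real w * of_real t)) (at (of_real t))"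
    by (auto intro!: derivative_eq_intros simp: algebra_simps)
  from has_vector_derivative_real_field[OF this] show ?thesis by (simp add: algebra_simps)
qed

lemma vdiff_exp: "vdiff k (\<lambda>s. exp (\<i> * complex_of_real (w * s))) = (\<lambda>s. (\<i> * complex_of_real w)^k * exp (\<i> * complex_of_real (w * s)))"
proof (induction k)
  case 0 then show ?case by simp
next
  case (Suc k)
  show ?case unfolding vdiff.simps Suc.IH by (rule ext) (rule vector_derivative_at[OF exp_hvd])
qed

lemma smooth_exp: "smoothRC (\<lambda>s. exp (\<i> * complex_of_real (w * s)))"
  unfolding smoothRC_def vdiff_exp using exp_hvd by blast

lemma Kop_exp: "Kop g n (\<lambda>s. exp (\<i> * complex_of_real (w * s))) t =
   \<i>^n * complex_of_real (poly (opoly g n) w) * exp (\<i> * complex_of_real (w * t))"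
proof -
  have "(\<Sum>k\<le>degree (opoly g n). complex_of_real (coeff (opoly g n) k) * \<i> ^ k * ((\<i> * complex_of_real w)^k * exp (\<i> * complex_of_real (w * t))))
    = complex_of_real (poly (opoly g n) (-w)) * exp (\<i> * complex_of_real (w * t))"
  proof -
    have pk: "\<And>k. complex_of_real (coeff (opoly g n) k) * \<i> ^ k * ((\<i> * complex_of_real w)^k * exp (\<i> * complex_of_real (w * t)))
       = complex_of_real (coeff (opoly g n) k * (-w)^k) * exp (\<i> * complex_of_real (w * t))"
    proof -
      fix k
      have "\<i> ^ k * (\<i> * complex_of_real w)^k = complex_of_real ((-w)^k)"
        by (simp add: power_mult_distrib flip: mult.assoc power_mult_distrib)
      then show "complex_of_real (coeff (opoly g n) k) * \<i> ^ k * ((\<i> * complex_of_real w)^k * exp (\<i> * complex_of_real (w * t)))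
       = complex_of_real (coeff (opoly g n) k * (-w)^k) * exp (\<i> * complex_of_real (w * t))"
        by (metis (no_types, lifting) mult.assoc of_real_mult)
    qed
    have "(\<Sum>k\<le>degree (opoly g n). complex_of_real (coeff (opoly g n) k) * \<i> ^ k * ((\<i> * complex_of_real w)^k * exp (\<i> * complex_of_real (w * t))))
      = (\<Sum>k\<le>degree (opoly g n). complex_of_real (coeff (opoly g n) k * (-w)^k) * exp (\<i> * complex_of_real (w * t)))"
      by (rule sum.cong[OF refl pk])
    also have "\<dots> = complex_of_real (poly (opoly g n) (-w)) * exp (\<i> * complex_of_real (w * t))"
      unfolding poly_altdef of_real_sum sum_distrib_right ..
    finally show ?thesis .
  qed
  moreover have "(- \<i>) ^ n * complex_of_real ((-1)^n * poly (opoly g n) w) = \<i>^n * complex_of_real (poly (opoly g n) w)"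
    by (simp add: power_mult_distrib flip: power_mult_distrib)
  ultimately show ?thesis unfolding Kop_def vdiff_exp opoly_par
    by (metis (no_types, lifting) mult.assoc sum.cong)
qed



lemma xy_bound: "2*\<bar>x*y\<bar> \<le> x^2 + (y::real)^2"
proof -
  have "0 \<le> (\<bar>x\<bar> - \<bar>y\<bar>)^2" by simp
  then show ?thesis by (simp add: power2_eq_square algebra_simps abs_mult)
qed

lemma absh: "\<bar>(a+b)/2\<bar> \<le> (\<bar>a\<bar>+\<bar>b\<bar>)/(2::real)"
  using abs_triangle_ineq[of a b] by simp

lemma lin_aux: "A \<le> 8*a + 16*b \<Longrightarrow> B \<le> 12*b + 24*c \<Longrightarrow> 0\<le>a \<Longrightarrow> 0\<le>b \<Longrightarrow> 0\<le>c \<Longrightarrow> (A+B)/2 \<le> 8*a + 28*b + 32*(c::real)"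
proof -
  assume "A \<le> 8*a + 16*b" "B \<le> 12*b + 24*c" "0\<le>a" "0\<le>b" "0\<le>c"
  then have "A+B \<le> 16*a + 56*b + 64*c" by linarith
  then show ?thesis by (simp add: field_simps)
qed

lemma quad_bound: fixes a b c x y :: real
  shows "\<bar>a*x^2 + b*(x*y) + c*y^2\<bar> \<le> (\<bar>a\<bar> + \<bar>b\<bar>/2 + \<bar>c\<bar>) * (x^2+y^2)"
proof -
  have 1: "\<bar>a*x^2\<bar> \<le> \<bar>a\<bar>*(x^2+y^2)" by (simp add: abs_mult mult_left_mono)
  have 2: "\<bar>c*y^2\<bar> \<le> \<bar>c\<bar>*(x^2+y^2)" by (simp add: abs_mult mult_left_mono)
  have 3: "\<bar>b*(x*y)\<bar> \<le> \<bar>b\<bar>/2*(x^2+y^2)"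
    using mult_left_mono[OF xy_bound[of x y], of "\<bar>b\<bar>"] by (simp add: abs_mult)
  have 4: "(\<bar>a\<bar> + \<bar>b\<bar>/2 + \<bar>c\<bar>) * (x^2+y^2) = \<bar>a\<bar>*(x^2+y^2) + \<bar>b\<bar>/2*(x^2+y^2) + \<bar>c\<bar>*(x^2+y^2)"
    by (simp add: algebra_simps)
  show ?thesis using 1 2 3 4 abs_triangle_ineq[of "a*x^2 + b*(x*y)" "c*y^2"] abs_triangle_ineq[of "a*x^2" "b*(x*y)"] by linarith
qed

lemma local_bounds:
  fixes g0 g1 g2 w x y z :: real
  assumes G: "g0 \<ge> 16" "g1 \<ge> 16" "g2 \<ge> 16" "\<bar>w\<bar> \<le> g0"
    and dl: "\<bar>g1-g0\<bar> \<le> 1" "\<bar>g2-g1\<bar> \<le> 1"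
    and rec: "g1*z = w*y - g0*x"
  defines "u \<equiv> x^2 + y^2"
    and "R0 \<equiv> g0*(x^2+y^2) - w*x*y"
    and "D0 \<equiv> g1*y^2 - g0*x^2 + w*x*y"
    and "R1 \<equiv> g1*(y^2+z^2) - w*y*z"
    and "D1 \<equiv> g2*z^2 - g1*y^2 + w*y*z"
  shows "R0 \<ge> g0*u/2" "\<bar>(R0 + (g1-g0)/(2*g1)*D0) - R0\<bar> \<le> 4*\<bar>g1-g0\<bar>*u"
    "R0 + (g1-g0)/(2*g1)*D0 \<ge> g0*u/4"
    "\<bar>(R1 + (g2-g1)/(2*g2)*D1) - (R0 + (g1-g0)/(2*g1)*D0)\<bar>
       \<le> (8*\<bar>(g2-g1)-(g1-g0)\<bar> + (28+32*\<bar>w\<bar>)*\<bar>g2-g1\<bar>/g0)*u"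
proof -
  have u0: "u \<ge> 0" unfolding u_def by simp
  have wxy: "\<bar>w*x*y\<bar> \<le> g0*u/2"
  proof -
    have "\<bar>w*x*y\<bar> = \<bar>w\<bar>*\<bar>x*y\<bar>" by (simp add: abs_mult)
    also have "\<dots> \<le> g0 * (u/2)" using xy_bound[of x y] G(4) u_def
      by (intro mult_mono) auto
    finally show ?thesis by simp
  qed
  show a: "R0 \<ge> g0*u/2" using wxy unfolding R0_def u_def by linarith
  have D0b: "\<bar>D0\<bar> \<le> 4*g0*u"
  proof -
    have e1: "\<bar>g1*y^2\<bar> = g1*y^2" "\<bar>g0*x^2\<bar> = g0*x^2" using G by auto
    have "\<bar>D0\<bar> \<le> g1*y^2 + g0*x^2 + \<bar>w*x*y\<bar>" unfolding D0_def
      using e1 abs_triangle_ineq[of "g1*y^2 - g0*x^2" "w*x*y"] abs_triangle_ineq4[of "g1*y^2" "g0*x^2"] by linarith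
    also have "\<dots> \<le> g1*u + g0*u + g0*u/2" using wxy G unfolding u_def
      by (intro add_mono mult_left_mono) auto
    also have "\<dots> \<le> 4*g0*u"
    proof -
      have "g1*u \<le> (2*g0)*u" using G dl u0 by (intro mult_right_mono) auto
      then show ?thesis using mult_nonneg_nonneg[of g0 u] G u0 unfolding mult.assoc by linarith
    qed
    finally show ?thesis .
  qed
  show b: "\<bar>(R0 + (g1-g0)/(2*g1)*D0) - R0\<bar> \<le> 4*\<bar>g1-g0\<bar>*u"
  proof -
    have "\<bar>(R0 + (g1-g0)/(2*g1)*D0) - R0\<bar> = \<bar>g1-g0\<bar>/(2*g1)*\<bar>D0\<bar>" using G by (simp add: abs_mult)
    also have "\<dots> \<le> \<bar>g1-g0\<bar>/(2*g1)*(4*g0*u)" using D0b G by (intro mult_left_mono) auto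
    also have "\<dots> = \<bar>g1-g0\<bar>*(4*u)*(g0/(2*g1))" by simp
    also have "\<dots> \<le> \<bar>g1-g0\<bar>*(4*u)*1" using G dl u0 by (intro mult_left_mono) (auto simp: field_simps)
    finally show ?thesis by simp
  qed
  show "R0 + (g1-g0)/(2*g1)*D0 \<ge> g0*u/4"
  proof -
    have "4*\<bar>g1-g0\<bar>*u \<le> 4*u" using mult_right_mono[OF dl(1) u0] by simp
    moreover have "4*u \<le> (g0/4)*u" using G u0 by (intro mult_right_mono) auto
    ultimately show ?thesis using a b by linarith
  qed
  have g1R1: "g1*R1 = g1^2*y^2 + (g1*z)^2 - w*y*(g1*z)" unfolding R1_def by (simp add: algebra_simps power2_eq_square)
  have g1R0: "g1*(R1 - R0) = (g1-g0)*D0" unfolding right_diff_distrib g1R1 rec unfolding R0_def D0_def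
    by (simp add: algebra_simps power2_eq_square)
  have R10: "R1 - R0 = (g1-g0)/g1*D0" using g1R0 G by (simp add: field_simps)
  have idT: "(R1 + (g2-g1)/(2*g2)*D1) - (R0 + (g1-g0)/(2*g1)*D0)
     = ((((g1-g0)/g1 - (g2-g1)/g2)*D0) + (g2-g1)/g2*(D0+D1))/2"
  proof -
    have hR1: "R1 = R0 + (g1-g0)/g1*D0" using R10 by simp
    show ?thesis unfolding hR1 using G by (simp add: field_simps)
  qed
  have g1S: "g1*(D0+D1) = g2*(g1*z)^2/g1 - g1*g0*x^2 + w*g1*(x*y) + w*y*(g1*z)"
    unfolding D0_def D1_def using G by (simp add: field_simps power2_eq_square)
  have idS: "g1*(D0+D1) = (g0*((g2-g1)-(g1-g0)) - g0*(g1-g0)*(g2-g1)/g1)*x^2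
      + (w*(g1-g0) - 2*w*g0*g2/g1)*(x*y) + (w^2*g2/g1 + w^2)*y^2"
    unfolding g1S rec using G by (simp add: field_simps power2_eq_square)
  have idC: "(g1-g0)/g1 - (g2-g1)/g2 = -((g2-g1)-(g1-g0))/g2 + (g1-g0)*(g2-g1)/(g1*g2)"
    using G by (simp add: field_simps)
  have r1: "g0 \<le> 2*g1" and r2: "g0 \<le> 2*g2" and r3: "g2 \<le> 2*g1" using G dl by auto
  define d0 where "d0 = g1-g0"
  define d1 where "d1 = g2-g1"
  define dd where "dd = d1-d0"
  have d0b: "\<bar>d0\<bar> \<le> 1" and d1b: "\<bar>d1\<bar> \<le> 1" and ddb: "\<bar>dd\<bar> \<le> 2" using dl unfolding d0_def d1_def dd_def by auto
  have Cb: "\<bar>d0/g1 - d1/g2\<bar> \<le> \<bar>dd\<bar>/g2 + \<bar>d1\<bar>/(g1*g2)"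
  proof -
    have e: "d0/g1 - d1/g2 = d0*d1/(g1*g2) - dd/g2"
      using idC unfolding d0_def[symmetric] d1_def[symmetric] dd_def[symmetric] by simp
    have "\<bar>d0/g1 - d1/g2\<bar> \<le> \<bar>d0*d1/(g1*g2)\<bar> + \<bar>dd/g2\<bar>" unfolding e by (rule abs_triangle_ineq4)
    moreover have "\<bar>dd/g2\<bar> = \<bar>dd\<bar>/g2" using G by simp
    ultimately have "\<bar>d0/g1 - d1/g2\<bar> \<le> \<bar>dd\<bar>/g2 + \<bar>d0*d1/(g1*g2)\<bar>" by linarith
    also have "\<bar>d0*d1/(g1*g2)\<bar> \<le> \<bar>d1\<bar>/(g1*g2)" using G d0b
      by (simp add: abs_mult divide_right_mono mult_left_le_one_le)
    finally show ?thesis by simp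
  qed
  have Ab: "\<bar>(d0/g1 - d1/g2)*D0\<bar> \<le> (8*\<bar>dd\<bar> + 16*\<bar>d1\<bar>/g0)*u"
  proof -
    have "\<bar>(d0/g1 - d1/g2)*D0\<bar> \<le> (\<bar>dd\<bar>/g2 + \<bar>d1\<bar>/(g1*g2))*(4*g0*u)"
      unfolding abs_mult using Cb D0b by (intro mult_mono) auto
    also have "\<dots> = \<bar>dd\<bar>*(4*u)*(g0/g2) + \<bar>d1\<bar>*(4*u)*(g0/(g1*g2))" by (simp add: algebra_simps)
    also have "\<dots> \<le> \<bar>dd\<bar>*(4*u)*2 + \<bar>d1\<bar>*(4*u)*(4/g0)"
    proof (intro add_mono mult_left_mono)
      show "g0/g2 \<le> 2" using r2 G by (simp add: field_simps)
      show "g0/(g1*g2) \<le> 4/g0"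
      proof -
        have "g0*g0 \<le> (2*g1)*(2*g2)" using r1 r2 G by (intro mult_mono) auto
        then show ?thesis using G by (simp add: field_simps)
      qed
    qed (use u0 in auto)
    finally show ?thesis by (simp add: algebra_simps)
  qed
  have Sb: "\<bar>D0+D1\<bar> \<le> 2*(\<bar>dd\<bar>+1+6*\<bar>w\<bar>)*u"
  proof -
    have "\<bar>g1*(D0+D1)\<bar> \<le> (\<bar>g0*dd - g0*d0*d1/g1\<bar> + \<bar>w*d0 - 2*w*g0*g2/g1\<bar>/2 + \<bar>w^2*g2/g1 + w^2\<bar>)*u"
      unfolding idS u_def d0_def d1_def dd_def by (rule quad_bound)
    also have "\<dots> \<le> ((g0*\<bar>dd\<bar> + 2) + (\<bar>w\<bar>*(1+4*g0))/2 + 3*\<bar>w\<bar>*g0)*u"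
    proof (intro mult_right_mono add_mono divide_right_mono)
      have q1: "\<bar>g0*d0*d1/g1\<bar> \<le> 2"
      proof -
        have "\<bar>g0*d0*d1/g1\<bar> = (g0/g1)*(\<bar>d0\<bar>*\<bar>d1\<bar>)" using G by (simp add: abs_mult)
        also have "\<dots> \<le> 2*1" using r1 G d0b d1b by (intro mult_mono) (auto simp: field_simps mult_le_one)
        finally show ?thesis by simp
      qed
      have q2: "\<bar>g0*dd\<bar> = g0*\<bar>dd\<bar>" using G by (simp add: abs_mult)
      show "\<bar>g0*dd - g0*d0*d1/g1\<bar> \<le> g0*\<bar>dd\<bar> + 2" by (rule order_trans[OF abs_triangle_ineq4[of "g0*dd" "g0*d0*d1/g1"] add_mono[OF eq_refl[OF q2] q1]])
      have "\<bar>2*w*g0*g2/g1\<bar> = \<bar>w\<bar>*(2*g0)*(g2/g1)" using G by (simp add: abs_mult)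
      also have "\<dots> \<le> \<bar>w\<bar>*(2*g0)*2" using r3 G by (intro mult_left_mono) (auto simp: field_simps)
      finally have q3: "\<bar>2*w*g0*g2/g1\<bar> \<le> \<bar>w\<bar>*(4*g0)" by simp
      have q4: "\<bar>w*d0\<bar> \<le> \<bar>w\<bar>" using mult_left_mono[OF d0b abs_ge_zero[of w]] by (simp add: abs_mult)
      have q5: "\<bar>w\<bar>*(1+4*g0) = \<bar>w\<bar> + \<bar>w\<bar>*(4*g0)" by (simp add: algebra_simps)
      show "\<bar>w*d0 - 2*w*g0*g2/g1\<bar> \<le> \<bar>w\<bar>*(1+4*g0)" unfolding q5 by (rule order_trans[OF abs_triangle_ineq4[of "w*d0" "2*w*g0*g2/g1"] add_mono[OF q4 q3]])
      have "g2/g1 \<le> 2" using r3 G by (simp add: field_simps)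
      then have "w^2*(g2/g1) \<le> w^2*2" by (rule mult_left_mono) simp
      then have "w^2*g2/g1 \<le> w^2*2" by simp
      moreover have "w^2 \<le> \<bar>w\<bar>*g0"
      proof -
        have "\<bar>w\<bar>*\<bar>w\<bar> \<le> \<bar>w\<bar>*g0" by (rule mult_left_mono[OF G(4)]) simp
        then show ?thesis by (simp add: power2_eq_square)
      qed
      ultimately show "\<bar>w^2*g2/g1 + w^2\<bar> \<le> 3*\<bar>w\<bar>*g0" using G by simp
    qed (use u0 in auto)
    also have "\<dots> \<le> g0*(\<bar>dd\<bar>+1+6*\<bar>w\<bar>)*u"
    proof (rule mult_right_mono[OF _ u0])
      have wg: "\<bar>w\<bar>*1 \<le> \<bar>w\<bar>*g0" using G by (intro mult_left_mono) auto
      have e1: "(g0*\<bar>dd\<bar> + 2) + (\<bar>w\<bar>*(1+4*g0))/2 + 3*\<bar>w\<bar>*g0 = g0*\<bar>dd\<bar> + 2 + \<bar>w\<bar>/2 + 5*(\<bar>w\<bar>*g0)"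
        by (simp add: algebra_simps)
      have e2: "g0*(\<bar>dd\<bar>+1+6*\<bar>w\<bar>) = g0*\<bar>dd\<bar> + g0 + 6*(\<bar>w\<bar>*g0)" by (simp add: algebra_simps)
      show "(g0*\<bar>dd\<bar> + 2) + (\<bar>w\<bar>*(1+4*g0))/2 + 3*\<bar>w\<bar>*g0 \<le> g0*(\<bar>dd\<bar>+1+6*\<bar>w\<bar>)"
        unfolding e1 e2 using wg G by linarith
    qed
    finally have "g1*\<bar>D0+D1\<bar> \<le> g0*(\<bar>dd\<bar>+1+6*\<bar>w\<bar>)*u" using G by (simp add: abs_mult)
    also have "\<dots> \<le> (2*g1)*(\<bar>dd\<bar>+1+6*\<bar>w\<bar>)*u" using r1 u0 by (intro mult_right_mono) auto
    also have "\<dots> = g1*(2*(\<bar>dd\<bar>+1+6*\<bar>w\<bar>)*u)" by (simp only: mult_ac)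
    finally show ?thesis using G by (subst (asm) mult_le_cancel_left_pos) auto
  qed
  have Bb: "\<bar>d1/g2*(D0+D1)\<bar> \<le> (2*\<bar>d1\<bar>/g0)*((6+12*\<bar>w\<bar>)*u)"
  proof -
    have "\<bar>d1/g2\<bar> \<le> 2*\<bar>d1\<bar>/g0"
    proof -
      have "\<bar>d1\<bar>*g0 \<le> \<bar>d1\<bar>*(2*g2)" using r2 by (intro mult_left_mono) auto
      then show ?thesis using G by (simp add: field_simps)
    qed
    moreover have "\<bar>D0+D1\<bar> \<le> (6+12*\<bar>w\<bar>)*u"
    proof -
      have aux: "\<And>a b::real. a \<le> 2 \<Longrightarrow> 2*(a+1+6*b) \<le> 6+12*b" by (simp add: algebra_simps)
      have "2*(\<bar>dd\<bar>+1+6*\<bar>w\<bar>) \<le> 6+12*\<bar>w\<bar>" by (rule aux[OF ddb])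
      from mult_right_mono[OF this u0] Sb show ?thesis by linarith
    qed
    ultimately show ?thesis unfolding abs_mult using G by (intro mult_mono) auto
  qed
  have main: "\<bar>(R1 + (g2-g1)/(2*g2)*D1) - (R0 + (g1-g0)/(2*g1)*D0)\<bar>
       \<le> (\<bar>(d0/g1 - d1/g2)*D0\<bar> + \<bar>d1/g2*(D0+D1)\<bar>)/2"
    unfolding idT d0_def d1_def by (rule absh)
  have fin: "(\<bar>(d0/g1 - d1/g2)*D0\<bar> + \<bar>d1/g2*(D0+D1)\<bar>)/2 \<le> (8*\<bar>dd\<bar> + (28+32*\<bar>w\<bar>)*\<bar>d1\<bar>/g0)*u"
  proof -
    have e1: "(8*\<bar>dd\<bar> + 16*\<bar>d1\<bar>/g0)*u = 8*(\<bar>dd\<bar>*u) + 16*(\<bar>d1\<bar>*u/g0)" by (simp add: algebra_simps)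
    have e2: "(2*\<bar>d1\<bar>/g0)*((6+12*\<bar>w\<bar>)*u) = 12*(\<bar>d1\<bar>*u/g0) + 24*(\<bar>w\<bar>*(\<bar>d1\<bar>*u/g0))" by (simp add: algebra_simps)
    have e3: "(8*\<bar>dd\<bar> + (28+32*\<bar>w\<bar>)*\<bar>d1\<bar>/g0)*u = 8*(\<bar>dd\<bar>*u) + 28*(\<bar>d1\<bar>*u/g0) + 32*(\<bar>w\<bar>*(\<bar>d1\<bar>*u/g0))"
      by (simp add: algebra_simps add_divide_distrib)
    have p1: "0 \<le> \<bar>dd\<bar>*u" "0 \<le> \<bar>d1\<bar>*u/g0" "0 \<le> \<bar>w\<bar>*(\<bar>d1\<bar>*u/g0)" using u0 G by auto
    show ?thesis using Ab Bb unfolding e1 e2 e3 by (rule lin_aux[OF _ _ p1])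
  qed
  show "\<bar>(R1 + (g2-g1)/(2*g2)*D1) - (R0 + (g1-g0)/(2*g1)*D0)\<bar>
       \<le> (8*\<bar>(g2-g1)-(g1-g0)\<bar> + (28+32*\<bar>w\<bar>)*\<bar>g2-g1\<bar>/g0)*u"
    using main fin unfolding dd_def d0_def d1_def by linarith
qed



lemma conv_pos:
  fixes T e :: "nat \<Rightarrow> real"
  assumes Tp: "\<And>m. m \<ge> N \<Longrightarrow> T m > 0"
    and Ti: "\<And>m. m \<ge> N \<Longrightarrow> \<bar>T (Suc m) - T m\<bar> \<le> e m * T m"
    and se: "summable e" and e0: "\<And>m. e m \<ge> 0"
  shows "\<exists>c>0. T \<longlonglongrightarrow> c"
proof -
  have "e \<longlonglongrightarrow> 0" using summable_LIMSEQ_zero[OF se] .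
  then have "eventually (\<lambda>m. e m < 1/2) sequentially" by (rule order_tendstoD) simp
  then obtain N2 where N2: "\<And>m. m \<ge> N2 \<Longrightarrow> e m < 1/2" unfolding eventually_sequentially by blast
  define a where "a k = ln (T (Suc k)) - ln (T k)" for k
  have ab: "norm (a k) \<le> 2 * e k" if k: "k \<ge> max N N2" for k
  proof -
    define r where "r = T (Suc k) / T k - 1"
    have Tk: "T k > 0" "T (Suc k) > 0" using Tp k by auto
    have rb: "\<bar>r\<bar> \<le> e k"
    proof -
      have "r = (T (Suc k) - T k) / T k" unfolding r_def using Tk by (simp add: field_simps)
      then have "\<bar>r\<bar> = \<bar>T (Suc k) - T k\<bar> / T k" using Tk by simp
      also have "\<dots> \<le> e k * T k / T k" using Ti[of k] k Tk by (intro divide_right_mono) auto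
      finally show ?thesis using Tk by simp
    qed
    have r2: "\<bar>r\<bar> \<le> 1/2" using rb N2[of k] k by auto
    have "a k = ln (1 + r)" unfolding a_def r_def using Tk by (simp add: ln_div)
    moreover have "\<bar>ln (1 + r) - r\<bar> \<le> 2 * r^2" by (rule abs_ln_one_plus_x_minus_x_bound[OF r2])
    moreover have "2 * r^2 \<le> \<bar>r\<bar>"
    proof -
      have "\<bar>r\<bar>*\<bar>r\<bar> \<le> \<bar>r\<bar>*(1/2)" using r2 by (intro mult_left_mono) auto
      then show ?thesis by (simp add: power2_eq_square)
    qed
    ultimately have "\<bar>a k\<bar> \<le> 2*\<bar>r\<bar>" by linarith
    then show ?thesis using rb by simp
  qed
  have sa: "summable a"
    by (rule summable_comparison_test'[of "\<lambda>k. 2 * e k" "max N N2"]) (use se ab in auto)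
  have "(\<lambda>n. \<Sum>k<n. a k) \<longlonglongrightarrow> suminf a" using summable_LIMSEQ[OF sa] .
  moreover have "(\<Sum>k<n. a k) = ln (T n) - ln (T 0)" for n
    unfolding a_def by (rule sum_lessThan_telescope)
  ultimately have "(\<lambda>n. ln (T n) - ln (T 0)) \<longlonglongrightarrow> suminf a" by simp
  then have "(\<lambda>n. (ln (T n) - ln (T 0)) + ln (T 0)) \<longlonglongrightarrow> suminf a + ln (T 0)"
    by (intro tendsto_add) auto
  then have "(\<lambda>n. exp (ln (T n))) \<longlonglongrightarrow> exp (suminf a + ln (T 0))"
    by (intro tendsto_exp) simp
  moreover have "eventually (\<lambda>n. exp (ln (T n)) = T n) sequentially"
    unfolding eventually_sequentially using Tp by auto
  ultimately have "T \<longlonglongrightarrow> exp (suminf a + ln (T 0))" by (rule Lim_transform_eventually)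
  then show ?thesis by (intro exI[of _ "exp (suminf a + ln (T 0))"]) auto
qed




lemma opoly_rec: "g (Suc n) \<noteq> 0 \<Longrightarrow> g (Suc n) * poly (opoly g (Suc (Suc n))) x = x * poly (opoly g (Suc n)) x - g n * poly (opoly g n) x"
  by simp

lemma opoly_nz:
  assumes pos: "\<And>n. g n > 0"
  shows "poly (opoly g n) x \<noteq> 0 \<or> poly (opoly g (Suc n)) x \<noteq> 0"
proof (induction n)
  case 0 then show ?case by simp
next
  case (Suc n)
  show ?case
  proof (rule ccontr)
    assume "\<not> ?case"
    then have "poly (opoly g (Suc n)) x = 0" "poly (opoly g (Suc (Suc n))) x = 0" by auto
    with opoly_rec[of g n x] pos[of "Suc n"] have "g n * poly (opoly g n) x = 0" by simp
    with pos[of n] have "poly (opoly g n) x = 0" by simp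
    with Suc \<open>poly (opoly g (Suc n)) x = 0\<close> show False by simp
  qed
qed

lemma main_conv:
  fixes \<gamma> :: "nat \<Rightarrow> real"
  assumes pos: "\<And>n. \<gamma> n > 0"
    and C1: "filterlim \<gamma> at_top sequentially"
    and C2: "(\<lambda>n. \<gamma> (Suc n) - \<gamma> n) \<longlonglongrightarrow> 0"
    and C6: "summable (\<lambda>n. \<bar>\<gamma> (Suc n) - \<gamma> n\<bar> / (\<gamma> n)\<^sup>2)"
    and C7: "summable (\<lambda>n. \<bar>(\<gamma> (Suc (Suc n)) - \<gamma> (Suc n)) - (\<gamma> (Suc n) - \<gamma> n)\<bar> / \<gamma> n)"
  shows "\<exists>c>0. (\<lambda>n. \<gamma> n * ((poly (opoly \<gamma> n) w)\<^sup>2 + (poly (opoly \<gamma> (Suc n)) w)\<^sup>2)) \<longlonglongrightarrow> c"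
proof -
  define P where "P n = poly (opoly \<gamma> n) w" for n
  have rec: "\<gamma> (Suc n) * P (Suc (Suc n)) = w * P (Suc n) - \<gamma> n * P n" for n
    unfolding P_def using opoly_rec[of \<gamma> n w] pos[of "Suc n"] by simp
  define u where "u n = (P n)^2 + (P (Suc n))^2" for n
  have u0: "u n > 0" for n
    using opoly_nz[where g=\<gamma> and n=n and x=w, OF pos] unfolding u_def P_def by (auto simp: add_pos_nonneg add_nonneg_pos)
  define G where "G = max 16 \<bar>w\<bar>"
  have ev1: "eventually (\<lambda>n. \<bar>\<gamma> (Suc n) - \<gamma> n\<bar> < 1) sequentially"
    using tendstoD[OF C2, of 1] by (simp add: dist_real_def)
  have ev2: "eventually (\<lambda>n. G \<le> \<gamma> n) sequentially"
    using C1 unfolding filterlim_at_top by blast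
  obtain N where N: "\<And>n. n \<ge> N \<Longrightarrow> \<bar>\<gamma> (Suc n) - \<gamma> n\<bar> < 1 \<and> G \<le> \<gamma> n"
    using eventually_conj[OF ev1 ev2] unfolding eventually_sequentially by blast
  define R where "R m = \<gamma> m * ((P m)^2 + (P (Suc m))^2) - w * P m * P (Suc m)" for m
  define D where "D m = \<gamma> (Suc m) * (P (Suc m))^2 - \<gamma> m * (P m)^2 + w * P m * P (Suc m)" for m
  define T where "T m = R m + (\<gamma> (Suc m) - \<gamma> m) / (2 * \<gamma> (Suc m)) * D m" for m
  define K where "K = 28 + 32 * \<bar>w\<bar>"
  define dd where "dd m = (\<gamma> (Suc (Suc m)) - \<gamma> (Suc m)) - (\<gamma> (Suc m) - \<gamma> m)" for m
  have LB: "R m \<ge> \<gamma> m * u m / 2 \<and> \<bar>T m - R m\<bar> \<le> 4 * \<bar>\<gamma> (Suc m) - \<gamma> m\<bar> * u m \<and> T m \<ge> \<gamma> m * u m / 4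
      \<and> \<bar>T (Suc m) - T m\<bar> \<le> (8 * \<bar>dd m\<bar> + K * \<bar>\<gamma> (Suc (Suc m)) - \<gamma> (Suc m)\<bar> / \<gamma> m) * u m"
    if m: "m \<ge> N" for m
  proof -
    have h: "\<bar>\<gamma> (Suc m) - \<gamma> m\<bar> < 1 \<and> G \<le> \<gamma> m" "\<bar>\<gamma> (Suc (Suc m)) - \<gamma> (Suc m)\<bar> < 1 \<and> G \<le> \<gamma> (Suc m)"
       "\<bar>\<gamma> (Suc (Suc (Suc m))) - \<gamma> (Suc (Suc m))\<bar> < 1 \<and> G \<le> \<gamma> (Suc (Suc m))"
      using N[of m] N[of "Suc m"] N[of "Suc (Suc m)"] m by auto
    have G16: "16 \<le> G" "\<bar>w\<bar> \<le> G" unfolding G_def by auto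
    note L = local_bounds[of "\<gamma> m" "\<gamma> (Suc m)" "\<gamma> (Suc (Suc m))" w "P (Suc (Suc m))" "P (Suc m)" "P m"]
    have "16 \<le> \<gamma> m" "16 \<le> \<gamma> (Suc m)" "16 \<le> \<gamma> (Suc (Suc m))" "\<bar>w\<bar> \<le> \<gamma> m"
         "\<bar>\<gamma> (Suc m) - \<gamma> m\<bar> \<le> 1" "\<bar>\<gamma> (Suc (Suc m)) - \<gamma> (Suc m)\<bar> \<le> 1"
      using h G16 by auto
    note L2 = L[OF this rec[of m]]
    show ?thesis
      using L2 unfolding R_def[of m] R_def[of "Suc m"] D_def[of m] D_def[of "Suc m"] T_def[of m] T_def[of "Suc m"] u_def dd_def K_def
      by (simp add: algebra_simps)
  qed
  have gpos: "\<gamma> m \<ge> 16" if "m \<ge> N" for m using N[OF that] unfolding G_def by auto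
  have Tp: "T m > 0" if "m \<ge> N" for m
  proof -
    have "\<gamma> m * u m / 4 > 0" using pos[of m] u0[of m] by simp
    then show ?thesis using LB[OF that] by linarith
  qed
  define e where "e m = (8 * \<bar>dd m\<bar> + K * \<bar>\<gamma> (Suc (Suc m)) - \<gamma> (Suc m)\<bar> / \<gamma> m) * 4 / \<gamma> m" for m
  have e0: "e m \<ge> 0" for m unfolding e_def K_def using pos[of m] by auto
  have Ti: "\<bar>T (Suc m) - T m\<bar> \<le> e m * T m" if m: "m \<ge> N" for m
  proof -
    have c0: "8 * \<bar>dd m\<bar> + K * \<bar>\<gamma> (Suc (Suc m)) - \<gamma> (Suc m)\<bar> / \<gamma> m \<ge> 0"
      unfolding K_def using pos[of m] by auto
    have "u m \<le> 4 * T m / \<gamma> m" using LB[OF m] pos[of m] by (simp add: field_simps)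
    from mult_left_mono[OF this c0] LB[OF m] show ?thesis unfolding e_def by (simp add: field_simps)
  qed
  have se: "summable e"
  proof -
    have s1: "summable (\<lambda>m. \<bar>dd m\<bar> / \<gamma> m)" using C7 unfolding dd_def .
    have s2: "summable (\<lambda>m. \<bar>\<gamma> (Suc (Suc m)) - \<gamma> (Suc m)\<bar> / (\<gamma> (Suc m))\<^sup>2)"
      using C6 by (subst summable_Suc_iff[where f = "\<lambda>n. \<bar>\<gamma> (Suc n) - \<gamma> n\<bar> / (\<gamma> n)\<^sup>2"])
    have s3: "summable (\<lambda>m. \<bar>\<gamma> (Suc (Suc m)) - \<gamma> (Suc m)\<bar> / (\<gamma> m)\<^sup>2)"
    proof (rule summable_comparison_test'[OF summable_mult[OF s2, of 4], where N=N])
      fix m assume m: "m \<ge> N"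
      have "\<gamma> (Suc m) \<le> 2 * \<gamma> m" using N[OF m] gpos[OF m] by auto
      then have "(\<gamma> (Suc m))\<^sup>2 \<le> (2 * \<gamma> m)\<^sup>2" using pos[of "Suc m"] by (intro power_mono) auto
      then have "(\<gamma> (Suc m))\<^sup>2 \<le> 4 * (\<gamma> m)\<^sup>2" by (simp add: power_mult_distrib)
      from mult_right_mono[OF this abs_ge_zero[of "\<gamma> (Suc (Suc m)) - \<gamma> (Suc m)"]]
      have "(\<gamma> (Suc m))\<^sup>2 * \<bar>\<gamma> (Suc (Suc m)) - \<gamma> (Suc m)\<bar> \<le> 4 * ((\<gamma> m)\<^sup>2 * \<bar>\<gamma> (Suc (Suc m)) - \<gamma> (Suc m)\<bar>)"
        by simp
      then have "\<bar>\<gamma> (Suc (Suc m)) - \<gamma> (Suc m)\<bar> / (\<gamma> m)\<^sup>2 \<le> 4 * (\<bar>\<gamma> (Suc (Suc m)) - \<gamma> (Suc m)\<bar> / (\<gamma> (Suc m))\<^sup>2)"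
        using pos[of m] pos[of "Suc m"] by (simp add: field_simps)
      then show "norm (\<bar>\<gamma> (Suc (Suc m)) - \<gamma> (Suc m)\<bar> / (\<gamma> m)\<^sup>2) \<le> 4 * (\<bar>\<gamma> (Suc (Suc m)) - \<gamma> (Suc m)\<bar> / (\<gamma> (Suc m))\<^sup>2)"
        by simp
    qed
    have "e = (\<lambda>m. 32 * (\<bar>dd m\<bar> / \<gamma> m) + (4*K) * (\<bar>\<gamma> (Suc (Suc m)) - \<gamma> (Suc m)\<bar> / (\<gamma> m)\<^sup>2))"
    proof (rule ext)
      fix m
      have "\<gamma> m \<noteq> 0" using pos[of m] by simp
      then show "e m = 32 * (\<bar>dd m\<bar> / \<gamma> m) + (4*K) * (\<bar>\<gamma> (Suc (Suc m)) - \<gamma> (Suc m)\<bar> / (\<gamma> m)\<^sup>2)"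
        unfolding e_def by (simp add: field_simps power2_eq_square)
    qed
    then show ?thesis using summable_add[OF summable_mult[OF s1] summable_mult[OF s3]] by simp
  qed
  obtain c where c: "c > 0" "T \<longlonglongrightarrow> c" using conv_pos[OF Tp Ti se e0] by blast
  define \<beta> where "\<beta> m = \<gamma> m * u m" for m
  have bT: "\<bar>\<beta> m - T m\<bar> \<le> ((2*\<bar>w\<bar> + 16 * \<bar>\<gamma> (Suc m) - \<gamma> m\<bar>) / \<gamma> m) * T m" if m: "m \<ge> N" for m
  proof -
    have e1: "\<beta> m - R m = w * P m * P (Suc m)" unfolding \<beta>_def R_def u_def by simp
    have "2*\<bar>P m * P (Suc m)\<bar> \<le> u m" unfolding u_def by (rule xy_bound)
    then have "\<bar>P m * P (Suc m)\<bar> \<le> u m / 2" by simp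
    from mult_left_mono[OF this abs_ge_zero[of w]]
    have "\<bar>\<beta> m - R m\<bar> \<le> \<bar>w\<bar> * (u m / 2)" unfolding e1 by (simp add: abs_mult mult.assoc)
    moreover have "\<bar>T m - R m\<bar> \<le> 4 * \<bar>\<gamma> (Suc m) - \<gamma> m\<bar> * u m" using LB[OF m] by simp
    moreover have "\<bar>\<beta> m - T m\<bar> \<le> \<bar>\<beta> m - R m\<bar> + \<bar>T m - R m\<bar>"
      using abs_triangle_ineq4[of "\<beta> m - R m" "T m - R m"] by simp
    moreover have "(\<bar>w\<bar>/2 + 4 * \<bar>\<gamma> (Suc m) - \<gamma> m\<bar>) * u m = \<bar>w\<bar> * (u m / 2) + 4 * \<bar>\<gamma> (Suc m) - \<gamma> m\<bar> * u m"
      by (simp add: algebra_simps)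
    ultimately have "\<bar>\<beta> m - T m\<bar> \<le> (\<bar>w\<bar>/2 + 4 * \<bar>\<gamma> (Suc m) - \<gamma> m\<bar>) * u m"
      by linarith
    also have "\<dots> \<le> (\<bar>w\<bar>/2 + 4 * \<bar>\<gamma> (Suc m) - \<gamma> m\<bar>) * (4 * T m / \<gamma> m)"
      using LB[OF m] pos[of m] by (intro mult_left_mono) (auto simp: field_simps)
    also have "\<dots> = ((2*\<bar>w\<bar> + 16 * \<bar>\<gamma> (Suc m) - \<gamma> m\<bar>) / \<gamma> m) * T m"
      using pos[of m] by (simp add: field_simps)
    finally show ?thesis .
  qed
  have "(\<lambda>m. ((2*\<bar>w\<bar> + 16 * \<bar>\<gamma> (Suc m) - \<gamma> m\<bar>) * inverse (\<gamma> m)) * T m) \<longlonglongrightarrow> ((2*\<bar>w\<bar> + 16 * 0) * 0) * c"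
    by (intro tendsto_intros c tendsto_inverse_0_at_top C1 tendsto_rabs_zero C2)
  then have "(\<lambda>m. ((2*\<bar>w\<bar> + 16 * \<bar>\<gamma> (Suc m) - \<gamma> m\<bar>) / \<gamma> m) * T m) \<longlonglongrightarrow> 0" by (simp add: divide_inverse)
  then have "(\<lambda>m. \<beta> m - T m) \<longlonglongrightarrow> 0"
    by (rule Lim_null_comparison[rotated]) (use bT in \<open>auto simp: eventually_sequentially\<close>)
  then have "(\<lambda>m. (\<beta> m - T m) + T m) \<longlonglongrightarrow> 0 + c" by (intro tendsto_add c)
  then have "\<beta> \<longlonglongrightarrow> c" by simp
  then show ?thesis using c(1) unfolding \<beta>_def u_def P_def by blast
qed


lemma cnj_exp_eq: "(\<lambda>s. cnj (exp (\<i> * complex_of_real (\<sigma> * s)))) = (\<lambda>s. exp (\<i> * complex_of_real ((-\<sigma>) * s)))"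
  by (rule ext) (simp add: exp_cnj)

lemma prod_term: "Kop g k (\<lambda>s. exp (\<i> * complex_of_real (\<omega> * s))) t * Kop g k (\<lambda>s. cnj (exp (\<i> * complex_of_real (\<sigma> * s)))) t
  = complex_of_real (poly (opoly g k) \<omega> * poly (opoly g k) \<sigma>) * (exp (\<i> * complex_of_real (\<omega> * t)) * exp (\<i> * complex_of_real ((-\<sigma>) * t)))"
proof -
  have "\<i>^k * \<i>^k * complex_of_real ((-1)^k) = (1::complex)"
    by (simp add: power_mult_distrib[symmetric] power_minus' flip: power_add mult_2) 
  then show ?thesis unfolding cnj_exp_eq Kop_exp opoly_par
    by (simp add: mult_ac)
qed

lemma CD: 
  assumes pos: "\<And>n. g n > 0"
  shows "(a - b) * (\<Sum>k\<le>n. poly (opoly g k) a * poly (opoly g k) b)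
    = g n * (poly (opoly g (Suc n)) a * poly (opoly g n) b - poly (opoly g n) a * poly (opoly g (Suc n)) b)"
proof (induction n)
  case 0 then show ?case using pos[of 0] by (simp add: field_simps)
next
  case (Suc n)
  have ra: "g (Suc n) * poly (opoly g (Suc (Suc n))) a = a * poly (opoly g (Suc n)) a - g n * poly (opoly g n) a"
    using opoly_rec[of g n a] pos[of "Suc n"] by simp
  have rb: "g (Suc n) * poly (opoly g (Suc (Suc n))) b = b * poly (opoly g (Suc n)) b - g n * poly (opoly g n) b"
    using opoly_rec[of g n b] pos[of "Suc n"] by simp
  have "g (Suc n) * (poly (opoly g (Suc (Suc n))) a * poly (opoly g (Suc n)) b - poly (opoly g (Suc n)) a * poly (opoly g (Suc (Suc n))) b)
    = (g (Suc n) * poly (opoly g (Suc (Suc n))) a) * poly (opoly g (Suc n)) b - poly (opoly g (Suc n)) a * (g (Suc n) * poly (opoly g (Suc (Suc n))) b)"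
    by (simp add: algebra_simps)
  also have "\<dots> = (a - b) * (\<Sum>k\<le>Suc n. poly (opoly g k) a * poly (opoly g k) b)"
    unfolding ra rb sum.atMost_Suc distrib_left Suc.IH by (simp add: algebra_simps)
  finally show ?case by simp
qed

lemma lagrange: "(a*b' - b*a')^2 \<le> (a^2+b^2)*(a'^2+(b'::real)^2)"
proof -
  have "(a^2+b^2)*(a'^2+b'^2) - (a*b' - b*a')^2 = (a*a' + b*b')^2" by (simp add: algebra_simps power2_eq_square)
  then show ?thesis by (smt (verit) zero_le_power2)
qed

lemma sum_at_top:
  assumes f0: "\<And>n. f n \<ge> (0::real)" and ns: "\<not> summable f"
  shows "filterlim (\<lambda>n. \<Sum>j\<le>n. f j) at_top sequentially"
  unfolding filterlim_at_top
proof
  fix Z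
  show "eventually (\<lambda>n. Z \<le> (\<Sum>j\<le>n. f j)) sequentially"
  proof (cases "\<exists>n. Z \<le> (\<Sum>j\<le>n. f j)")
    case True
    then obtain n0 where n0: "Z \<le> (\<Sum>j\<le>n0. f j)" by blast
    have "Z \<le> (\<Sum>j\<le>n. f j)" if "n \<ge> n0" for n
    proof -
      have "(\<Sum>j\<le>n0. f j) \<le> (\<Sum>j\<le>n. f j)" using that f0 by (intro sum_mono2) auto
      then show ?thesis using n0 by linarith
    qed
    then show ?thesis unfolding eventually_sequentially by blast
  next
    case False
    then have "summable f" using f0 by (intro bounded_imp_summable[of f Z]) (auto simp: not_le less_imp_le)
    with ns show ?thesis by blast
  qed
qed

theorem theorem32:
  fixes \<gamma> :: "nat \<Rightarrow> real"
  assumes pos: "\<And>n. \<gamma> n > 0"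
    and C1: "filterlim \<gamma> at_top sequentially"
    and C2: "(\<lambda>n. \<gamma> (Suc n) - \<gamma> n) \<longlonglongrightarrow> 0"
    and C3: "\<exists>n0 m0. \<forall>n\<ge>n0. \<forall>m\<ge>m0. \<gamma> (n + m) > \<gamma> n"
    and C4: "\<not> summable (\<lambda>j. 1 / \<gamma> j)"
    and C5: "\<exists>\<kappa>>1. summable (\<lambda>j. \<gamma> j powr (- \<kappa>))"
    and C6: "summable (\<lambda>n. \<bar>\<gamma> (Suc n) - \<gamma> n\<bar> / (\<gamma> n)\<^sup>2)"
    and C7: "summable (\<lambda>n. \<bar>(\<gamma> (Suc (Suc n)) - \<gamma> (Suc n)) - (\<gamma> (Suc n) - \<gamma> n)\<bar> / \<gamma> n)"
  shows "(\<forall>\<omega>::real. (\<lambda>t. exp (\<i> * complex_of_real (\<omega> * t))) \<in> classL \<gamma> \<and>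
            (\<forall>t. \<exists>c>0. (\<lambda>n. beta \<gamma> (\<lambda>s. exp (\<i> * complex_of_real (\<omega> * s))) n t) \<longlonglongrightarrow> c))
       \<and> (\<forall>\<omega> \<sigma> t::real. \<omega> \<noteq> \<sigma> \<longrightarrow>
            (\<lambda>n. (\<Sum>k\<le>n. Kop \<gamma> k (\<lambda>s. exp (\<i> * complex_of_real (\<omega> * s))) t *
                          Kop \<gamma> k (\<lambda>s. cnj (exp (\<i> * complex_of_real (\<sigma> * s)))) t)
                 / complex_of_real (\<Sum>j\<le>n. 1 / \<gamma> j)) \<longlonglongrightarrow> 0)"
proof -
  define B where "B w n = \<gamma> n * ((poly (opoly \<gamma> n) w)\<^sup>2 + (poly (opoly \<gamma> (Suc n)) w)\<^sup>2)" for w n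
  have beq: "beta \<gamma> (\<lambda>s. exp (\<i> * complex_of_real (w * s))) n t = B w n" for w n t
    unfolding beta_def B_def Kop_exp by (simp add: norm_mult norm_power)
  have beq': "beta \<gamma> (\<lambda>s. exp (\<i> * complex_of_real (w * s))) = (\<lambda>n t. B w n)" for w
    by (intro ext) (rule beq)
  have Bc: "\<exists>c>0. B w \<longlonglongrightarrow> c" for w
    unfolding B_def by (rule main_conv[OF pos C1 C2 C6 C7])
  have part1: "(\<lambda>t. exp (\<i> * complex_of_real (\<omega> * t))) \<in> classL \<gamma> \<and>
            (\<forall>t. \<exists>c>0. (\<lambda>n. beta \<gamma> (\<lambda>s. exp (\<i> * complex_of_real (\<omega> * s))) n t) \<longlonglongrightarrow> c)" for \<omega>
  proof -
    obtain c where c: "c > 0" "B \<omega> \<longlonglongrightarrow> c" using Bc by blast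
    have "uniform_limit {a..b} (beta \<gamma> (\<lambda>t. exp (\<i> * complex_of_real (\<omega> * t)))) (\<lambda>t. c) sequentially" for a b
      unfolding uniform_limit_iff beq
    proof (intro allI impI)
      fix e :: real assume "e > 0"
      then have "eventually (\<lambda>n. dist (B \<omega> n) c < e) sequentially" using tendstoD[OF c(2)] by blast
      then show "eventually (\<lambda>n. \<forall>x\<in>{a..b}. dist (B \<omega> n) c < e) sequentially" by (rule eventually_mono) auto
    qed
    then show ?thesis unfolding classL_def mem_Collect_eq beq' using smooth_exp c by blast
  qed
  have part2: "(\<lambda>n. (\<Sum>k\<le>n. Kop \<gamma> k (\<lambda>s. exp (\<i> * complex_of_real (\<omega> * s))) t *
                          Kop \<gamma> k (\<lambda>s. cnj (exp (\<i> * complex_of_real (\<sigma> * s)))) t)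
                 / complex_of_real (\<Sum>j\<le>n. 1 / \<gamma> j)) \<longlonglongrightarrow> 0" if ne: "\<omega> \<noteq> \<sigma>" for \<omega> \<sigma> t
  proof -
    define S where "S n = (\<Sum>k\<le>n. poly (opoly \<gamma> k) \<omega> * poly (opoly \<gamma> k) \<sigma>)" for n
    define H where "H n = (\<Sum>j\<le>n. 1 / \<gamma> j)" for n
    define E where "E = exp (\<i> * complex_of_real (\<omega> * t)) * exp (\<i> * complex_of_real ((-\<sigma>) * t))"
    have nE: "norm E = 1" unfolding E_def by (simp add: norm_mult)
    have Hpos: "H n > 0" for n
    proof -
      have "1 / \<gamma> 0 \<le> H n" unfolding H_def using pos by (intro member_le_sum) (auto simp: less_imp_le)
      moreover have "1 / \<gamma> 0 > 0" using pos[of 0] by simp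
      ultimately show ?thesis by linarith
    qed
    have seq: "(\<Sum>k\<le>n. Kop \<gamma> k (\<lambda>s. exp (\<i> * complex_of_real (\<omega> * s))) t *
                          Kop \<gamma> k (\<lambda>s. cnj (exp (\<i> * complex_of_real (\<sigma> * s)))) t) = complex_of_real (S n) * E" for n
      unfolding prod_term S_def E_def of_real_sum sum_distrib_right ..
    obtain c1 where c1: "B \<omega> \<longlonglongrightarrow> c1" using Bc by blast
    obtain c2 where c2: "B \<sigma> \<longlonglongrightarrow> c2" using Bc by blast
    obtain K1 where K1: "K1 > 0" "\<And>n. norm (B \<omega> n) \<le> K1" using convergent_imp_Bseq[OF convergentI[OF c1]] unfolding Bseq_def by blast
    obtain K2 where K2: "K2 > 0" "\<And>n. norm (B \<sigma> n) \<le> K2" using convergent_imp_Bseq[OF convergentI[OF c2]] unfolding Bseq_def by blast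
    define M where "M = sqrt (K1 * K2) / \<bar>\<omega> - \<sigma>\<bar>"
    have Sb: "\<bar>S n\<bar> \<le> M" for n
    proof -
      define a where "a = poly (opoly \<gamma> (Suc n)) \<omega>"
      define b where "b = poly (opoly \<gamma> n) \<omega>"
      define a' where "a' = poly (opoly \<gamma> (Suc n)) \<sigma>"
      define b' where "b' = poly (opoly \<gamma> n) \<sigma>"
      have cd: "(\<omega> - \<sigma>) * S n = \<gamma> n * (a*b' - b*a')" unfolding S_def a_def b_def a'_def b'_def by (rule CD[OF pos])
      have "((\<omega> - \<sigma>) * S n)^2 = \<gamma> n ^2 * (a*b' - b*a')^2" unfolding cd by (simp add: power_mult_distrib)
      also have "\<dots> \<le> \<gamma> n ^2 * ((a^2+b^2)*(a'^2+b'^2))" by (intro mult_left_mono lagrange) simp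
      also have "\<dots> = B \<omega> n * B \<sigma> n" unfolding B_def a_def b_def a'_def b'_def by (simp add: algebra_simps power2_eq_square)
      also have "\<dots> \<le> K1 * K2"
      proof -
        have "B \<omega> n \<ge> 0" "B \<sigma> n \<ge> 0" unfolding B_def using pos[of n] by auto
        then show ?thesis using K1(2)[of n] K2(2)[of n] by (intro mult_mono) auto
      qed
      finally have "\<bar>(\<omega> - \<sigma>) * S n\<bar> \<le> sqrt (K1 * K2)" using real_sqrt_le_mono by fastforce
      then have "\<bar>\<omega> - \<sigma>\<bar> * \<bar>S n\<bar> \<le> sqrt (K1 * K2)" by (simp add: abs_mult)
      then show ?thesis unfolding M_def using ne by (simp add: field_simps)
    qed
    have Hinf: "filterlim H at_top sequentially" unfolding H_def
      by (rule sum_at_top[OF _ C4]) (use pos in \<open>auto simp: less_imp_le\<close>)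
    have "(\<lambda>n. M * inverse (H n)) \<longlonglongrightarrow> M * 0"
      by (intro tendsto_intros tendsto_inverse_0_at_top Hinf)
    then have lim0: "(\<lambda>n. M * inverse (H n)) \<longlonglongrightarrow> 0" by simp
    have nb: "norm ((complex_of_real (S n) * E) / complex_of_real (H n)) \<le> M * inverse (H n)" for n
    proof -
      have "norm ((complex_of_real (S n) * E) / complex_of_real (H n)) = \<bar>S n\<bar> / H n"
        using Hpos[of n] nE by (simp add: norm_mult norm_divide)
      also have "\<dots> \<le> M / H n" using Sb[of n] Hpos[of n] by (intro divide_right_mono) auto
      finally show ?thesis by (simp add: divide_inverse)
    qed
    show ?thesis unfolding seq H_def[symmetric]
      by (rule Lim_null_comparison[OF _ lim0]) (use nb in auto)
  qed
  show ?thesis using part1 part2 by blast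
qed


end
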